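(* Let $\mathcal{G}^{c}=(\mathbb{C},\mathbb{E}^{c})$ be a C-DMG over DMGs and let $\mathbb{C}_X,\mathbb{C}_Y,\mathbb{C}_W$ be pairwise disjoint subsets of $\mathbb{C}$. If $\mathbb{C}_X$ and $\mathbb{C}_Y$ are $\sigma$-separated by $\mathbb{C}_W$ in $\mathcal{G}^{c}$, then in every DMG $\mathcal{G}=(\mathbb{V},\mathbb{E})$ compatible with $\mathcal{G}^{c}$, the sets $X=\bigcup_{C\in\mathbb{C}_X}C$ and $Y=\bigcup_{C\in\mathbb{C}_Y}C$ are $\sigma$-separated by $W=\bigcup_{C\in\mathbb{C}_W}C$.
   Context: A directed mixed graph (DMG) $\mathcal{G}=(\mathbb{V},\mathbb{E})$ has directed edges $\to$ and bidirected edges $\leftrightarrow$, cycles allowed; the DMGs considered are those induced by input/output structural causal models (ioSCMs, Forré–Mooij 2020): vertices are the endogenous and input variables, $U\to V$ if $U$ is an argument of the causal mechanism of $V$, and $U\leftrightarrow V$ if some latent variable is a parent of both. A C-DMG over DMGs $\mathcal{G}^c=(\mathbb{C},\mathbb{E}^c)$ is obtained from such a DMG $\mathcal{G}=(\mathbb{V},\mathbb{E})$ as follows: $\mathbb{C}$ is a partition of $\mathbb{V}$ into nonempty clusters, and for all $C_i,C_j\in\mathbb{C}$ (possibly equal) the edge $C_i\to C_j$ (resp. $C_i\leftrightarrow C_j$) is in $\mathbb{E}^c$ iff there exist $V_i\in C_i,V_j\in C_j$ with $V_i\to V_j$ (resp. $V_i\leftrightarrow V_j$) in $\mathbb{E}$;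 such $\mathcal{G}$ is called compatible with $\mathcal{G}^c$. In any such graph, ancestors and descendants include the vertex itself, and the strongly connected component of $V$ is $\mathrm{Sc}(V)=\mathrm{Anc}(V)\cap\mathrm{Desc}(V)$. Write $A\mathbin{*\!\!\to} B$ for an edge $A\to B$ or $A\leftrightarrow B$, and $A\mathbin{\leftarrow\!\!*} B$ for $A\leftarrow B$ or $A\leftrightarrow B$. A walk $\langle V_1,\dots,V_n\rangle$ (a sequence of vertices with consecutive vertices joined by a specified edge) is $\sigma$-blocked by a set $W$ if: (1) $V_1\in W$ or $V_n\in W$; or (2) for some $1<i<n$, $V_{i-1}\mathbin{*\!\!\to}V_i\mathbin{\leftarrow\!\!*}V_{i+1}$ on the walk and $V_i\notin W$; or (3) for some $1<i<n$, $V_{i-1}\leftarrow V_i\mathbin{\leftarrow\!\!*}V_{i+1}$ on the walk and $V_i\in W\setminus \mathrm{Sc}(V_{i-1})$; or (4) for some $1<i<n$, $V_{i-1}\mathbin{*\!\!\to}V_i\to V_{i+1}$ on the walk and $V_i\in W\setminus\mathrm{Sc}(V_{i+1})$; or (5) for some $1<i<n$, $V_{i-1}\leftarrow V_i\to V_{i+1}$ on the walk and $V_i\in W\setminus(\mathrm{Sc}(V_{i-1})\cap\mathrm{Sc}(V_{i+1}))$. For disjoint vertex sets $X,Y,W$, $W$ $\sigma$-separates $X$ and $Y$ if every walk from a vertex of $X$ to a vertex of $Y$ is $\sigma$-blocked by $W$. These notions apply to both DMGs and C-DMGs. *)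

theory Defs
  imports Main
begin

text \<open>A mixed graph: vertex set, directed edges (a,b) meaning a \<rightarrow> b,
  bidirected edges (stored symmetrically). Used both for DMGs (vertices of type 'v)
  and for C-DMGs (vertices = clusters, of type 'v set).\<close>
record 'v mgraph =
  verts :: "'v set"
  dir   :: "('v \<times> 'v) set"
  bi    :: "('v \<times> 'v) set"

definition wf_mgraph :: "'v mgraph \<Rightarrow> bool" where
  "wf_mgraph G \<longleftrightarrow> finite (verts G) \<and> dir G \<subseteq> verts G \<times> verts G
     \<and> bi G \<subseteq> verts G \<times> verts G \<and> sym (bi G)"

datatype ekind = Fwd | Bwd | Bi

fun has_edge :: "'v mgraph \<Rightarrow> 'v \<Rightarrow> ekind \<Rightarrow> 'v \<Rightarrow> bool" where
  "has_edge G a Fwd b = ((a, b) \<in> dir G)"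
| "has_edge G a Bwd b = ((b, a) \<in> dir G)"
| "has_edge G a Bi b = ((a, b) \<in> bi G)"

definition is_walk :: "'v mgraph \<Rightarrow> 'v list \<Rightarrow> ekind list \<Rightarrow> bool" where
  "is_walk G vs es \<longleftrightarrow> vs \<noteq> [] \<and> set vs \<subseteq> verts G \<and> length es = length vs - 1
     \<and> (\<forall>i < length es. has_edge G (vs ! i) (es ! i) (vs ! Suc i))"

definition anc :: "'v mgraph \<Rightarrow> 'v \<Rightarrow> 'v set" where
  "anc G v = {u. (u, v) \<in> (dir G)\<^sup>*}"

definition desc :: "'v mgraph \<Rightarrow> 'v \<Rightarrow> 'v set" where
  "desc G v = {u. (v, u) \<in> (dir G)\<^sup>*}"

definition Sc :: "'v mgraph \<Rightarrow> 'v \<Rightarrow> 'v set" where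
  "Sc G v = anc G v \<inter> desc G v"

text \<open>Arrowhead at vs!i from the left iff e1 \<noteq> Bwd; from the right iff e2 \<noteq> Fwd.\<close>
definition sigma_blocked :: "'v mgraph \<Rightarrow> 'v list \<Rightarrow> ekind list \<Rightarrow> 'v set \<Rightarrow> bool" where
  "sigma_blocked G vs es W \<longleftrightarrow>
     hd vs \<in> W \<or> last vs \<in> W \<or>
     (\<exists>i. 0 < i \<and> i < length vs - 1 \<and>
        (let e1 = es ! (i - 1); e2 = es ! i;
             p = vs ! (i - 1); v = vs ! i; q = vs ! Suc i in
          (e1 \<noteq> Bwd \<and> e2 \<noteq> Fwd \<and> v \<notin> W) \<or>
          (e1 = Bwd \<and> e2 \<noteq> Fwd \<and> v \<in> W - Sc G p) \<or>
          (e1 \<noteq> Bwd \<and> e2 = Fwd \<and> v \<in> W - Sc G q) \<or>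
          (e1 = Bwd \<and> e2 = Fwd \<and> v \<in> W - (Sc G p \<inter> Sc G q))))"

definition sigma_sep :: "'v mgraph \<Rightarrow> 'v set \<Rightarrow> 'v set \<Rightarrow> 'v set \<Rightarrow> bool" where
  "sigma_sep G X Y W \<longleftrightarrow>
     (\<forall>vs es. is_walk G vs es \<and> hd vs \<in> X \<and> last vs \<in> Y \<longrightarrow> sigma_blocked G vs es W)"

definition is_partition :: "'v set set \<Rightarrow> 'v set \<Rightarrow> bool" where
  "is_partition P V \<longleftrightarrow> (\<forall>C\<in>P. C \<noteq> {}) \<and> \<Union>P = V
     \<and> (\<forall>C1\<in>P. \<forall>C2\<in>P. C1 \<noteq> C2 \<longrightarrow> C1 \<inter> C2 = {})"

definition compatible :: "'v mgraph \<Rightarrow> 'v set mgraph \<Rightarrow> bool" where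
  "compatible G Gc \<longleftrightarrow> wf_mgraph G \<and> is_partition (verts Gc) (verts G)
     \<and> dir Gc = {(Ci, Cj). Ci \<in> verts Gc \<and> Cj \<in> verts Gc \<and> (\<exists>a\<in>Ci. \<exists>b\<in>Cj. (a, b) \<in> dir G)}
     \<and> bi Gc = {(Ci, Cj). Ci \<in> verts Gc \<and> Cj \<in> verts Gc \<and> (\<exists>a\<in>Ci. \<exists>b\<in>Cj. (a, b) \<in> bi G)}"

end

theory Submission
  imports Defs
begin

definition clus :: "'v set set \<Rightarrow> 'v \<Rightarrow> 'v set" where
  "clus P v = (SOME C. C \<in> P \<and> v \<in> C)"

lemma clus_in:
  assumes "is_partition P V" "v \<in> V"
  shows "clus P v \<in> P \<and> v \<in> clus P v"
proof -
  have "\<exists>C. C \<in> P \<and> v \<in> C" using assms unfolding is_partition_def by blast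
  then show ?thesis unfolding clus_def by (rule someI_ex)
qed

lemma clus_eq:
  assumes "is_partition P V" "C \<in> P" "v \<in> C"
  shows "clus P v = C"
proof -
  have "v \<in> V" using assms unfolding is_partition_def by blast
  from clus_in[OF assms(1) this] assms show ?thesis
    unfolding is_partition_def by blast
qed

lemma clus_rtrancl:
  assumes c: "compatible G Gc" and r: "(a, b) \<in> (dir G)\<^sup>*"
  shows "(clus (verts Gc) a, clus (verts Gc) b) \<in> (dir Gc)\<^sup>*"
  using r
proof (induction rule: rtrancl_induct)
  case base then show ?case by simp
next
  case (step y z)
  have p: "is_partition (verts Gc) (verts G)" and w: "wf_mgraph G"
    using c unfolding compatible_def by auto
  have yz: "y \<in> verts G" "z \<in> verts G" using step(2) w unfolding wf_mgraph_def by auto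
  have "(clus (verts Gc) y, clus (verts Gc) z) \<in> dir Gc"
    using c clus_in[OF p yz(1)] clus_in[OF p yz(2)] step(2) unfolding compatible_def by blast
  then show ?case using step(3) by simp
qed

lemma clus_Sc:
  assumes c: "compatible G Gc" and u: "u \<in> Sc G v"
  shows "clus (verts Gc) u \<in> Sc Gc (clus (verts Gc) v)"
  using u clus_rtrancl[OF c] unfolding Sc_def anc_def desc_def by blast

theorem theorem1:
  fixes Gc :: "'v set mgraph" and CX CY CW :: "'v set set"
  assumes "CX \<subseteq> verts Gc" and "CY \<subseteq> verts Gc" and "CW \<subseteq> verts Gc"
    and "CX \<inter> CY = {}" and "CX \<inter> CW = {}" and "CY \<inter> CW = {}"
    and "sigma_sep Gc CX CY CW"
  shows "\<forall>G :: 'v mgraph. compatible G Gc \<longrightarrow> sigma_sep G (\<Union>CX) (\<Union>CY) (\<Union>CW)"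
proof (intro allI impI)
  fix G :: "'v mgraph"
  assume c: "compatible G Gc"
  have p: "is_partition (verts Gc) (verts G)" using c unfolding compatible_def by auto
  define cl where "cl = clus (verts Gc)"
  have clin: "\<And>v. v \<in> verts G \<Longrightarrow> cl v \<in> verts Gc \<and> v \<in> cl v"
    using clus_in[OF p] unfolding cl_def by blast
  have cleq: "\<And>C v. C \<in> verts Gc \<Longrightarrow> v \<in> C \<Longrightarrow> cl v = C"
    using clus_eq[OF p] unfolding cl_def by blast
  have memU: "\<And>v CS. CS \<subseteq> verts Gc \<Longrightarrow> v \<in> verts G \<Longrightarrow> (v \<in> \<Union>CS) = (cl v \<in> CS)"
  proof -
    fix v CS assume a: "CS \<subseteq> verts Gc" "v \<in> verts G"
    show "(v \<in> \<Union>CS) = (cl v \<in> CS)"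
    proof
      assume "v \<in> \<Union>CS"
      then obtain C where "C \<in> CS" "v \<in> C" by blast
      then show "cl v \<in> CS" using cleq a by auto
    next
      assume "cl v \<in> CS" then show "v \<in> \<Union>CS" using clin[OF a(2)] by blast
    qed
  qed
  have ScD: "\<And>u v. cl u \<notin> Sc Gc (cl v) \<Longrightarrow> u \<notin> Sc G v"
    using clus_Sc[OF c] unfolding cl_def by blast
  show "sigma_sep G (\<Union>CX) (\<Union>CY) (\<Union>CW)"
    unfolding sigma_sep_def
  proof (intro allI impI, elim conjE)
    fix vs es
    assume w: "is_walk G vs es" and hx: "hd vs \<in> \<Union>CX" and ly: "last vs \<in> \<Union>CY"
    have ne: "vs \<noteq> []" and sv: "set vs \<subseteq> verts G" and le: "length es = length vs - 1"
      and ed: "\<forall>i < length es. has_edge G (vs ! i) (es ! i) (vs ! Suc i)"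
      using w unfolding is_walk_def by auto
    have vin: "\<And>i. i < length vs \<Longrightarrow> vs ! i \<in> verts G" using sv by auto
    let ?cs = "map cl vs"
    have hdv0: "hd vs \<in> verts G" "last vs \<in> verts G" using ne sv by auto
    have "is_walk Gc ?cs es"
      unfolding is_walk_def
    proof (intro conjI allI impI)
      show "?cs \<noteq> []" using ne by simp
      show "set ?cs \<subseteq> verts Gc" using sv clin by auto
      show "length es = length ?cs - 1" using le by simp
    next
      fix i assume i: "i < length es"
      have a: "vs ! i \<in> verts G" "vs ! Suc i \<in> verts G" using i le vin by auto
      have h: "has_edge G (vs ! i) (es ! i) (vs ! Suc i)" using ed i by auto
      have "?cs ! i = cl (vs ! i)" "?cs ! Suc i = cl (vs ! Suc i)" using i le by auto
      then show "has_edge Gc (?cs ! i) (es ! i) (?cs ! Suc i)"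
        using h clin[OF a(1)] clin[OF a(2)] c unfolding compatible_def
        by (cases "es ! i") auto
    qed
    moreover have "hd ?cs \<in> CX" using hx memU[OF assms(1), of "hd vs"] hdv0 ne by (auto simp add: hd_map)
    moreover have "last ?cs \<in> CY" using ly memU[OF assms(2), of "last vs"] hdv0 ne by (auto simp add: last_map)
    ultimately have b: "sigma_blocked Gc ?cs es CW" using assms(7) unfolding sigma_sep_def by blast
    show "sigma_blocked G vs es (\<Union>CW)"
    proof -
      have hdv: "hd vs \<in> verts G" "last vs \<in> verts G" using ne sv by auto
      consider (h) "hd ?cs \<in> CW" | (l) "last ?cs \<in> CW" |
        (m) i where "0 < i" "i < length ?cs - 1"
          "(let e1 = es ! (i - 1); e2 = es ! i;
             p = ?cs ! (i - 1); v = ?cs ! i; q = ?cs ! Suc i in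
          (e1 \<noteq> Bwd \<and> e2 \<noteq> Fwd \<and> v \<notin> CW) \<or>
          (e1 = Bwd \<and> e2 \<noteq> Fwd \<and> v \<in> CW - Sc Gc p) \<or>
          (e1 \<noteq> Bwd \<and> e2 = Fwd \<and> v \<in> CW - Sc Gc q) \<or>
          (e1 = Bwd \<and> e2 = Fwd \<and> v \<in> CW - (Sc Gc p \<inter> Sc Gc q)))"
        using b unfolding sigma_blocked_def by blast
      then show ?thesis
      proof cases
        case h then show ?thesis using memU[OF assms(3) hdv(1)] ne
          unfolding sigma_blocked_def by (simp add: hd_map)
      next
        case l then show ?thesis using memU[OF assms(3) hdv(2)] ne
          unfolding sigma_blocked_def by (simp add: last_map)
      next
        case (m i)
        have il: "i - 1 < length vs" "i < length vs" "Suc i < length vs" using m by auto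
        have e: "?cs ! (i-1) = cl (vs ! (i-1))" "?cs ! i = cl (vs ! i)" "?cs ! Suc i = cl (vs ! Suc i)"
          using il by auto
        have W: "(vs ! i \<in> \<Union>CW) = (cl (vs ! i) \<in> CW)" using memU[OF assms(3) vin[OF il(2)]] .
        have S1: "cl (vs ! i) \<notin> Sc Gc (cl (vs ! (i-1))) \<Longrightarrow> vs ! i \<notin> Sc G (vs ! (i-1))" by (rule ScD)
        have S2: "cl (vs ! i) \<notin> Sc Gc (cl (vs ! Suc i)) \<Longrightarrow> vs ! i \<notin> Sc G (vs ! Suc i)" by (rule ScD)
        have "(let e1 = es ! (i - 1); e2 = es ! i;
             p = vs ! (i - 1); v = vs ! i; q = vs ! Suc i in
          (e1 \<noteq> Bwd \<and> e2 \<noteq> Fwd \<and> v \<notin> \<Union>CW) \<or>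
          (e1 = Bwd \<and> e2 \<noteq> Fwd \<and> v \<in> \<Union>CW - Sc G p) \<or>
          (e1 \<noteq> Bwd \<and> e2 = Fwd \<and> v \<in> \<Union>CW - Sc G q) \<or>
          (e1 = Bwd \<and> e2 = Fwd \<and> v \<in> \<Union>CW - (Sc G p \<inter> Sc G q)))"
          using m(3) W S1 S2 unfolding Let_def e Diff_iff Int_iff by blast
        then show ?thesis unfolding sigma_blocked_def using m(1,2) by auto
      qed
    qed
  qed
qed

end
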